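(* Let $K\colon\mathbb{E}(D)\to\mathbb{E}(D)$ be an affine function and $u\colon D\to[0,\infty)$. If $\mathsf{D}K$ has a $u$-ranking supermartingale, then $\inf_n(\mathsf{D}K)^n(u)=\mathbb{O}$.
   Context: $\mathbb{E}(D)$ is the set of functions $D\to[0,\infty]$ with pointwise order and operations ($\infty+x=\infty$, $0\cdot\infty=0$, $r\cdot\infty=\infty$ for $r>0$); $\mathbb{O}$ is the constant zero function; for $x\ge y$ in $[0,\infty]$, $x-y$ is the least $z$ with $x=y+z$. $K$ is affine if $K(\alpha\eta_1+(1-\alpha)\eta_2)=\alpha K(\eta_1)+(1-\alpha)K(\eta_2)$ for all $\eta_1,\eta_2$ and $\alpha\in[0,1]$. $(\mathsf{D}K)(\eta)=K(\eta)-K(\mathbb{O})$. A $u$-ranking supermartingale with respect to $\mathsf{D}K$ is a function $r\colon D\to[0,\infty)$ with $(\mathsf{D}K)(r)+u\le r$. *)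

theory Defs
  imports "HOL-Library.Extended_Nonnegative_Real"
begin

text \<open>E(D) is rendered as the type 'd \<Rightarrow> ennreal with pointwise order/operations.
  The truncated difference on [0,\<infinity>]: for x \<ge> y, the least z with x = y + z.\<close>

definition tdiff :: "ennreal \<Rightarrow> ennreal \<Rightarrow> ennreal" where
  "tdiff x y = (LEAST z. x = y + z)"

definition zeroE :: "'d \<Rightarrow> ennreal" where
  "zeroE = (\<lambda>_. 0)"

definition affineE :: "(('d \<Rightarrow> ennreal) \<Rightarrow> ('d \<Rightarrow> ennreal)) \<Rightarrow> bool" where
  "affineE K \<longleftrightarrow> (\<forall>\<eta>1 \<eta>2 (\<alpha>::real). 0 \<le> \<alpha> \<and> \<alpha> \<le> 1 \<longrightarrow>
     K (\<lambda>d. ennreal \<alpha> * \<eta>1 d + ennreal (1 - \<alpha>) * \<eta>2 d) =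
     (\<lambda>d. ennreal \<alpha> * K \<eta>1 d + ennreal (1 - \<alpha>) * K \<eta>2 d))"

definition diffop :: "(('d \<Rightarrow> ennreal) \<Rightarrow> ('d \<Rightarrow> ennreal)) \<Rightarrow> ('d \<Rightarrow> ennreal) \<Rightarrow> ('d \<Rightarrow> ennreal)" where
  "diffop K \<eta> = (\<lambda>d. tdiff (K \<eta> d) (K zeroE d))"

definition ranking_supermartingale ::
  "(('d \<Rightarrow> ennreal) \<Rightarrow> ('d \<Rightarrow> ennreal)) \<Rightarrow> ('d \<Rightarrow> ennreal) \<Rightarrow> ('d \<Rightarrow> ennreal) \<Rightarrow> bool" where
  "ranking_supermartingale L u r \<longleftrightarrow> (\<forall>d. r d < \<infinity>) \<and> (\<forall>d. L r d + u d \<le> r d)"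

end

theory Submission
  imports Defs
begin
lemma tdiff_top: "tdiff \<infinity> \<infinity> = 0"
  unfolding tdiff_def by (intro Least_equality) auto
lemma tdiff_eq: assumes "y \<le> x" "y \<noteq> \<infinity>" shows "tdiff x y = x - y"
  unfolding tdiff_def
  proof (intro Least_equality)
    show "x = y + (x - y)" using assms by (metis add_diff_inverse_ennreal top.not_eq_extremum)
    show "\<And>z. x = y + z \<Longrightarrow> x - y \<le> z" using assms
      by (simp add: ennreal_add_diff_cancel_left)
  qed

lemma key:
  assumes "affineE K"
  shows "K (\<lambda>d. a d + b d) d + K zeroE d = K a d + K b d"
proof -
  have h: "ennreal (1 - 1/2) = ennreal (1/2)" by simp
  have A: "\<And>\<eta>1 \<eta>2. K (\<lambda>d. ennreal (1/2) * \<eta>1 d + ennreal (1 - 1/2) * \<eta>2 d) =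
     (\<lambda>d. ennreal (1/2) * K \<eta>1 d + ennreal (1 - 1/2) * K \<eta>2 d)"
  proof -
    fix \<eta>1 \<eta>2
    have all: "\<forall>\<eta>1 \<eta>2 (\<alpha>::real). 0 \<le> \<alpha> \<and> \<alpha> \<le> 1 \<longrightarrow>
     K (\<lambda>d. ennreal \<alpha> * \<eta>1 d + ennreal (1 - \<alpha>) * \<eta>2 d) =
     (\<lambda>d. ennreal \<alpha> * K \<eta>1 d + ennreal (1 - \<alpha>) * K \<eta>2 d)"
      using assms by (simp only: affineE_def)
    show "K (\<lambda>d. ennreal (1/2) * \<eta>1 d + ennreal (1 - 1/2) * \<eta>2 d) =
     (\<lambda>d. ennreal (1/2) * K \<eta>1 d + ennreal (1 - 1/2) * K \<eta>2 d)"
      by (rule all[rule_format]) simp_all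
  qed
  have 1: "K (\<lambda>d. ennreal (1/2) * a d + ennreal (1/2) * b d) = (\<lambda>d. ennreal (1/2) * K a d + ennreal (1/2) * K b d)"
    using A[of a b] unfolding h .
  have 2: "K (\<lambda>d. ennreal (1/2) * (a d + b d) + ennreal (1/2) * zeroE d) = (\<lambda>d. ennreal (1/2) * K (\<lambda>d. a d + b d) d + ennreal (1/2) * K zeroE d)"
    using A[of "\<lambda>d. a d + b d" zeroE] unfolding h .
  have "(\<lambda>d. ennreal (1/2) * (a d + b d) + ennreal (1/2) * zeroE d) = (\<lambda>d. ennreal (1/2) * a d + ennreal (1/2) * b d)"
    by (simp add: zeroE_def distrib_left)
  then have "(\<lambda>d. ennreal (1/2) * K (\<lambda>d. a d + b d) d + ennreal (1/2) * K zeroE d) = (\<lambda>d. ennreal (1/2) * K a d + ennreal (1/2) * K b d)"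
    using 1 2 by simp
  then have "ennreal (1/2) * K (\<lambda>d. a d + b d) d + ennreal (1/2) * K zeroE d = ennreal (1/2) * K a d + ennreal (1/2) * K b d"
    by (rule fun_cong)
  then have "ennreal 2 * (ennreal (1/2) * K (\<lambda>d. a d + b d) d + ennreal (1/2) * K zeroE d) = ennreal 2 * (ennreal (1/2) * K a d + ennreal (1/2) * K b d)"
    by simp
  moreover have "ennreal 2 * ennreal (1/2) = 1"
    by (subst ennreal_mult[symmetric]) auto
  ultimately show ?thesis by (simp add: distrib_left mult.assoc[symmetric])
qed

lemma lower:
  assumes "affineE K" "K zeroE d < \<infinity>"
  shows "K zeroE d \<le> K \<eta> d"
proof (rule ccontr)
  assume "\<not> ?thesis"
  then have lt: "K \<eta> d < K zeroE d" by simp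
  obtain c where c: "K zeroE d = ennreal c" "c \<ge> 0" using assms(2) by (cases "K zeroE d") auto
  obtain x where x: "K \<eta> d = ennreal x" "x \<ge> 0" using lt assms(2) by (cases "K \<eta> d") auto
  have xc: "x < c" using lt c x by (simp add: ennreal_less_iff)
  define \<alpha> where "\<alpha> = (c - x) / (2*c)"
  have a0: "0 < \<alpha>" "\<alpha> \<le> 1" using xc x unfolding \<alpha>_def by (auto simp: field_simps)
  define \<eta>' where "\<eta>' = (\<lambda>d. ennreal (1/\<alpha>) * \<eta> d)"
  have eq: "(\<lambda>d. ennreal \<alpha> * \<eta>' d + ennreal (1 - \<alpha>) * zeroE d) = \<eta>"
  proof
    fix d
    have 1: "ennreal \<alpha> * ennreal (1/\<alpha>) = 1" using a0 by (simp flip: ennreal_mult)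
    have "ennreal \<alpha> * \<eta>' d = (ennreal \<alpha> * ennreal (1/\<alpha>)) * \<eta> d"
      unfolding \<eta>'_def by (simp only: mult.assoc)
    then have "ennreal \<alpha> * \<eta>' d = \<eta> d" using 1 by simp
    then show "ennreal \<alpha> * \<eta>' d + ennreal (1 - \<alpha>) * zeroE d = \<eta> d" using a0 by (simp add: zeroE_def)
  qed
  have "K \<eta> = (\<lambda>d. ennreal \<alpha> * K \<eta>' d + ennreal (1 - \<alpha>) * K zeroE d)"
  proof -
    have "K (\<lambda>d. ennreal \<alpha> * \<eta>' d + ennreal (1 - \<alpha>) * zeroE d) = (\<lambda>d. ennreal \<alpha> * K \<eta>' d + ennreal (1 - \<alpha>) * K zeroE d)"
      using assms(1) a0 unfolding affineE_def by auto
    then show ?thesis unfolding eq .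
  qed
  then have "K \<eta> d = ennreal \<alpha> * K \<eta>' d + ennreal (1 - \<alpha>) * K zeroE d" by (rule fun_cong)
  then have "ennreal (1 - \<alpha>) * K zeroE d \<le> K \<eta> d" by simp
  then have "ennreal ((1 - \<alpha>) * c) \<le> ennreal x" using c x a0 by (simp add: ennreal_mult)
  then have "(1 - \<alpha>) * c \<le> x" using x by (simp add: ennreal_le_iff)
  moreover have "(1 - \<alpha>) * c = (c + x) / 2" using xc x unfolding \<alpha>_def by (auto simp: field_simps)
  ultimately show False using xc by simp
qed
lemma ge0: assumes "affineE K" shows "K zeroE d \<le> K \<eta> d"
proof (cases "K zeroE d = \<infinity>")
  case True
  have "K (\<lambda>x. \<eta> x + \<eta> x) d + K zeroE d = K \<eta> d + K \<eta> d" using key[OF assms] .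
  then have "K \<eta> d + K \<eta> d = \<infinity>" using True by simp
  then show ?thesis using True by simp
next
  case False then show ?thesis using lower[OF assms] by (simp add: top.not_eq_extremum)
qed

lemma diffop_add: assumes "affineE K"
  shows "diffop K (\<lambda>d. a d + b d) d = diffop K a d + diffop K b d"
proof (cases "K zeroE d = \<infinity>")
  case True
  then have "K \<eta> d = \<infinity>" for \<eta> using ge0[OF assms, of d \<eta>] by (simp add: top_unique)
  then have "diffop K \<eta> d = 0" for \<eta> unfolding diffop_def using True tdiff_top by metis
  then show ?thesis by simp
next
  case False
  define c where "c = K zeroE d"
  have k: "K (\<lambda>d. a d + b d) d + c = K a d + K b d" using key[OF assms] c_def by simp
  have ga: "c \<le> K a d" and gb: "c \<le> K b d" and gab: "c \<le> K (\<lambda>d. a d + b d) d"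
    using ge0[OF assms] c_def by auto
  have eq: "diffop K \<eta> d = K \<eta> d - c" for \<eta>
    unfolding diffop_def c_def[symmetric] using ge0[OF assms, of d \<eta>] False c_def by (simp add: tdiff_eq)
  obtain p where p: "K a d = c + p" using ga by (metis add_diff_inverse_ennreal)
  obtain q where q: "K b d = c + q" using gb by (metis add_diff_inverse_ennreal)
  have "K (\<lambda>d. a d + b d) d + c = (p + q + c) + c" using k p q by (simp add: algebra_simps)
  then have "c + K (\<lambda>d. a d + b d) d = c + (p + q + c)" by (simp add: add.commute)
  then have "K (\<lambda>d. a d + b d) d = p + q + c" using False c_def
    by (simp only: ennreal_add_left_cancel) simp
  then show ?thesis using eq p q False c_def
    by (simp add: ennreal_add_diff_cancel_left add.commute add.left_commute)
qed

lemma diffop_mono: assumes "affineE K" "\<And>d. a d \<le> b d"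
  shows "diffop K a d \<le> diffop K b d"
proof -
  have "b = (\<lambda>d. a d + (b d - a d))" using assms(2) by (simp add: add_diff_inverse_ennreal)
  then have "diffop K b d = diffop K a d + diffop K (\<lambda>d. b d - a d) d"
    using diffop_add[OF assms(1)] by metis
  then show ?thesis by simp
qed

lemma pow_props: assumes "affineE K"
  shows "(diffop K ^^ n) (\<lambda>d. a d + b d) = (\<lambda>d. (diffop K ^^ n) a d + (diffop K ^^ n) b d)
     \<and> ((\<forall>d. a d \<le> b d) \<longrightarrow> (\<forall>d. (diffop K ^^ n) a d \<le> (diffop K ^^ n) b d))"
proof (induction n arbitrary: a b)
  case 0 then show ?case by simp
next
  case (Suc n)
  show ?case
    using Suc[of a b] diffop_add[OF assms] diffop_mono[OF assms] by simp
qed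

theorem theorem3p6:
  fixes K :: "('d \<Rightarrow> ennreal) \<Rightarrow> ('d \<Rightarrow> ennreal)" and u :: "'d \<Rightarrow> ennreal"
  assumes "affineE K"
    and "\<forall>d. u d < \<infinity>"
    and "\<exists>r. ranking_supermartingale (diffop K) u r"
  shows "(INF n. (diffop K ^^ n) u) = zeroE"
proof -
  define L where "L = diffop K"
  obtain r where rfin: "\<And>d. r d < \<infinity>" and rs: "\<And>d. L r d + u d \<le> r d"
    using assms(3) unfolding ranking_supermartingale_def L_def by blast
  have P: "(\<Sum>k<n. (L ^^ k) u d) + (L ^^ n) r d \<le> r d" for n d
  proof (induction n arbitrary: d)
    case 0 then show ?case by simp
  next
    case (Suc n)
    have "(L ^^ Suc n) r d = (L ^^ n) (L r) d" by (simp add: funpow_Suc_right del: funpow.simps)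
    then have "(L ^^ n) u d + (L ^^ Suc n) r d = (L ^^ n) (\<lambda>d. u d + L r d) d"
      using pow_props[OF assms(1), of n u "L r"] unfolding L_def by simp
    also have "\<dots> \<le> (L ^^ n) r d"
      using pow_props[OF assms(1), of n "\<lambda>d. u d + L r d" r] rs unfolding L_def by (simp add: add.commute)
    finally have "(\<Sum>k<Suc n. (L ^^ k) u d) + (L ^^ Suc n) r d \<le> (\<Sum>k<n. (L ^^ k) u d) + (L ^^ n) r d"
      by (simp add: add.assoc add_left_mono)
    then show ?case using Suc[of d] by order
  qed
  have "(INF n. (L ^^ n) u d) = 0" for d
  proof (rule ccontr)
    define m where "m = (INF n. (L ^^ n) u d)"
    assume "(INF n. (L ^^ n) u d) \<noteq> 0"
    then have m0: "m > 0" unfolding m_def using not_gr_zero by blast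
    have mle: "m \<le> (L ^^ k) u d" for k unfolding m_def by (rule INF_lower) simp
    have "of_nat n * m \<le> r d" for n
    proof -
      have "of_nat n * m = (\<Sum>k<n. m)" by simp
      also have "\<dots> \<le> (\<Sum>k<n. (L ^^ k) u d)" by (intro sum_mono mle)
      also have "\<dots> \<le> r d" using P[where n=n and d=d] by (rule order_trans[rotated]) simp
      finally show ?thesis .
    qed
    moreover have "m < \<infinity>" using mle[of 0] assms(2) by (simp add: order.strict_trans1)
    moreover obtain m' where m': "m = ennreal m'" "m' \<ge> 0" using \<open>m < \<infinity>\<close> by (cases m) auto
    moreover obtain R where R: "r d = ennreal R" "R \<ge> 0" using rfin[of d] by (cases "r d") auto
    moreover obtain n where n: "R / m' < real n" using reals_Archimedean2 by blast
    moreover have "of_nat n * ennreal m' = ennreal (real n * m')" using m' by (simp add: ennreal_mult ennreal_of_nat_eq_real_of_nat)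
    ultimately have "ennreal (real n * m') \<le> ennreal R" by metis
    then have "real n * m' \<le> R" using R by simp
    moreover have "m' > 0" using m0 m' by simp
    ultimately show False using n by (simp add: field_simps)
  qed
  then show ?thesis unfolding L_def zeroE_def by (simp add: fun_eq_iff image_comp)
qed
end
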